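(* Let $\mathbf A$ be a pseudo-Kleene lattice. Then $\mathbf A$ satisfies (SP2) if and only if, for all $x,y\in A$ with $x\leq y$: (1) $\pi_{0_{x,y}}(x)$ and $\pi_{0_{x,y}}(y)$ are sharp elements of $\mathbf{Local}(x,y)$; and (2) $(\mathrm{Sh}(\mathbf{Local}(x,y)),\leq,{}',0_{x,y},1_{x,y})$ is an orthogonal poset.
   Context: A pseudo-Kleene lattice is an algebra $(A,\land,\lor,{}',0,1)$ that is a bounded lattice with an antitone involution ${}'$ ($x\leq y\Rightarrow y'\leq x'$, $x''=x$) satisfying $x\land x'\leq y\lor y'$. (SP2): for all $x,y$, $x\leq y$ implies $(x\land x')\lor(y\land y')=(x'\land y)\land(x'\land y)'$. For $x,y\in A$ put $0_{x,y}=(x\land x')\lor(y\land y')$, $1_{x,y}=(x\lor x')\land(y\lor y')$, and for $z,w\in A$, $\pi_z(w)=(w\land(z\lor z'))\lor(z\land z')$. The localizer $\mathbf{Local}(x,y)$ is the pseudo-Kleene lattice on the interval $[0_{x,y},1_{x,y}]$ with $\land,\lor,{}'$ inherited from $\mathbf A$ and bounds $0_{x,y},1_{x,y}$. An element $u$ of a pseudo-Kleene lattice with bottom $b$ is sharp if $u\land u'=b$; $\mathrm{Sh}(\cdot)$ is the set of sharp elements. An orthogonal poset is a bounded poset with antitone involution ${}'$ in which $u\land u'$ is the bottom for every $u$ (meet existing) and, whenever $u\leq v'$, the join $u\lor v$ exists; here order and joins in $\mathrm{Sh}(\mathbf{Local}(x,y))$ are understood as those inherited from $\mathbf{Local}(x,y)$,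 i.e. for sharp $u\leq v'$ the element $u\lor v$ is sharp. *)

theory Defs
  imports Main
begin

definition pseudo_kleene :: "('a::bounded_lattice \<Rightarrow> 'a) \<Rightarrow> bool" where
  "pseudo_kleene c \<longleftrightarrow>
     (\<forall>x y. x \<le> y \<longrightarrow> c y \<le> c x) \<and> (\<forall>x. c (c x) = x) \<and>
     (\<forall>x y. inf x (c x) \<le> sup y (c y))"

definition SP2 :: "('a::bounded_lattice \<Rightarrow> 'a) \<Rightarrow> bool" where
  "SP2 c \<longleftrightarrow> (\<forall>x y. x \<le> y \<longrightarrow>
      sup (inf x (c x)) (inf y (c y)) = inf (inf (c x) y) (c (inf (c x) y)))"

definition zero_xy :: "('a::bounded_lattice \<Rightarrow> 'a) \<Rightarrow> 'a \<Rightarrow> 'a \<Rightarrow> 'a" where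
  "zero_xy c x y = sup (inf x (c x)) (inf y (c y))"

definition one_xy :: "('a::bounded_lattice \<Rightarrow> 'a) \<Rightarrow> 'a \<Rightarrow> 'a \<Rightarrow> 'a" where
  "one_xy c x y = inf (sup x (c x)) (sup y (c y))"

definition proj :: "('a::bounded_lattice \<Rightarrow> 'a) \<Rightarrow> 'a \<Rightarrow> 'a \<Rightarrow> 'a" where
  "proj c z w = sup (inf w (sup z (c z))) (inf z (c z))"

text \<open>Carrier of Local(x,y): the interval [0_{x,y}, 1_{x,y}] (operations inherited).\<close>
definition local_carrier :: "('a::bounded_lattice \<Rightarrow> 'a) \<Rightarrow> 'a \<Rightarrow> 'a \<Rightarrow> 'a set" where
  "local_carrier c x y = {u. zero_xy c x y \<le> u \<and> u \<le> one_xy c x y}"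

definition Sh_local :: "('a::bounded_lattice \<Rightarrow> 'a) \<Rightarrow> 'a \<Rightarrow> 'a \<Rightarrow> 'a set" where
  "Sh_local c x y = {u \<in> local_carrier c x y. inf u (c u) = zero_xy c x y}"

text \<open>Orthogonal poset (S, \<le>, c, b, t) with order, meets and joins inherited from the ambient lattice.\<close>
definition orthogonal_poset :: "'a::lattice set \<Rightarrow> ('a \<Rightarrow> 'a) \<Rightarrow> 'a \<Rightarrow> 'a \<Rightarrow> bool" where
  "orthogonal_poset S c b t \<longleftrightarrow>
     b \<in> S \<and> t \<in> S \<and> (\<forall>u\<in>S. b \<le> u \<and> u \<le> t) \<and>
     (\<forall>u\<in>S. c u \<in> S) \<and>
     (\<forall>u\<in>S. \<forall>v\<in>S. u \<le> v \<longrightarrow> c v \<le> c u) \<and> (\<forall>u\<in>S. c (c u) = u) \<and>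
     (\<forall>u\<in>S. inf u (c u) = b) \<and>
     (\<forall>u\<in>S. \<forall>v\<in>S. u \<le> c v \<longrightarrow> sup u v \<in> S)"

end

theory Submission
  imports Defs
begin

context
  fixes c :: "'a::bounded_lattice \<Rightarrow> 'a"
  assumes pk: "pseudo_kleene c"
begin

lemma anti: "x \<le> y \<Longrightarrow> c y \<le> c x"
  using pk unfolding pseudo_kleene_def by blast

lemma inv[simp]: "c (c x) = x"
  using pk unfolding pseudo_kleene_def by blast

lemma kl: "inf x (c x) \<le> sup y (c y)"
  using pk unfolding pseudo_kleene_def by blast

lemma le_iff[simp]: "c x \<le> c y \<longleftrightarrow> y \<le> x"
  by (metis anti inv)

lemma csup[simp]: "c (sup x y) = inf (c x) (c y)"
proof (rule antisym)
  show "c (sup x y) \<le> inf (c x) (c y)" by (simp add: anti)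
  have "sup x y \<le> c (inf (c x) (c y))"
    by (metis anti inf_le1 inf_le2 inv sup_least)
  then show "inf (c x) (c y) \<le> c (sup x y)" by (metis anti inv)
qed

lemma cinf[simp]: "c (inf x y) = sup (c x) (c y)"
  by (metis csup inv)

lemma kl2: "inf x (c x) \<le> sup (c y) y"
  using kl[of x "c y"] by simp

lemma zero_le_one: "zero_xy c x y \<le> one_xy c x y"
  unfolding zero_xy_def one_xy_def by (intro le_infI le_supI kl)

lemma c_zero[simp]: "c (zero_xy c x y) = one_xy c x y"
  unfolding zero_xy_def one_xy_def by (simp add: sup_commute)

lemma c_one[simp]: "c (one_xy c x y) = zero_xy c x y"
  by (metis c_zero inv)

lemma proj_eq: "proj c (zero_xy c x y) w = sup (inf w (one_xy c x y)) (zero_xy c x y)"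
  unfolding proj_def using zero_le_one[of x y]
  by (simp add: sup_absorb2 inf_absorb1)

lemma proj_in: "zero_xy c x y \<le> proj c (zero_xy c x y) w \<and> proj c (zero_xy c x y) w \<le> one_xy c x y"
  unfolding proj_eq using zero_le_one[of x y] by (simp add: le_infI2)

lemma proj_x: assumes "x \<le> y"
  shows "proj c (zero_xy c x y) x = sup x (inf y (c y))"
proof -
  have "x \<le> one_xy c x y" unfolding one_xy_def using assms
    by (meson le_infI le_supI1 order_trans sup_ge1)
  then have ix: "inf x (one_xy c x y) = x" by (simp add: inf_absorb1)
  show ?thesis unfolding proj_eq ix unfolding zero_xy_def
    by (simp add: sup_assoc[symmetric] sup_absorb1)
qed

lemma proj_y: assumes "x \<le> y"
  shows "proj c (zero_xy c x y) y = inf y (sup x (c x))"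
proof -
  have e: "inf y (one_xy c x y) = inf y (sup x (c x))" unfolding one_xy_def
    by (rule antisym) (auto intro: le_infI2 le_infI1)
  have a: "inf x (c x) \<le> inf y (sup x (c x))" using assms
    by (meson inf_le1 le_infI le_supI1 order_trans)
  have "c y \<le> c x" using assms by (rule anti)
  then have b: "inf y (c y) \<le> inf y (sup x (c x))"
    by (meson inf_le1 inf_le2 le_infI le_supI2 order_trans)
  show ?thesis unfolding proj_eq e unfolding zero_xy_def using a b
    by (simp add: sup_absorb1)
qed

lemma fwdA: assumes sp: "SP2 c" and xy: "x \<le> y"
  shows "inf (sup x (inf y (c y))) (c (sup x (inf y (c y)))) = zero_xy c x y"
proof -
  let ?b = "inf y (c y)"
  let ?x1 = "sup x ?b"
  have x1y: "?x1 \<le> y" using xy by simp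
  have s1: "sup (inf ?x1 (c ?x1)) ?b = inf (inf (c ?x1) y) (c (inf (c ?x1) y))"
    using sp x1y unfolding SP2_def by blast
  have t: "inf (c ?x1) y = inf (c x) y"
    by (rule antisym) (auto intro: le_infI1 le_infI2)
  have s2: "zero_xy c x y = inf (inf (c x) y) (c (inf (c x) y))"
    using sp xy unfolding SP2_def zero_xy_def by blast
  have s3: "sup (inf ?x1 (c ?x1)) ?b = zero_xy c x y" unfolding s2 by (rule s1[unfolded t])
  have up: "inf ?x1 (c ?x1) \<le> zero_xy c x y"
  proof -
    have "inf ?x1 (c ?x1) \<le> sup (inf ?x1 (c ?x1)) ?b" by (rule sup_ge1)
    then show ?thesis unfolding s3 .
  qed
  have cyx: "c y \<le> c x" using xy by (rule anti)
  have l1: "zero_xy c x y \<le> ?x1" unfolding zero_xy_def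
    by (rule sup_mono) simp_all
  have cx1: "c ?x1 = inf (c x) (sup (c y) y)" by simp
  have l2a: "zero_xy c x y \<le> c x" unfolding zero_xy_def
    using cyx by (simp add: le_infI2)
  have l2b: "zero_xy c x y \<le> sup (c y) y" unfolding zero_xy_def
    using kl2[of x y] by (simp add: le_supI2 le_infI1)
  have l2: "zero_xy c x y \<le> c ?x1" unfolding cx1 using l2a l2b by (rule le_infI)
  show ?thesis using up l1 l2 by (meson antisym le_infI)
qed

lemma zero_swap: "zero_xy c (c y) (c x) = zero_xy c x y"
  unfolding zero_xy_def by (simp add: sup_commute inf_commute)

lemma fwd: assumes sp: "SP2 c" and xy: "x \<le> y"
  shows "proj c (zero_xy c x y) x \<in> Sh_local c x y \<and>
       proj c (zero_xy c x y) y \<in> Sh_local c x y \<and>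
       orthogonal_poset (Sh_local c x y) c (zero_xy c x y) (one_xy c x y)"
proof (intro conjI)
  show "proj c (zero_xy c x y) x \<in> Sh_local c x y"
    using proj_in[of x y x] fwdA[OF sp xy] proj_x[OF xy]
    unfolding Sh_local_def local_carrier_def by simp
  have cyx: "c y \<le> c x" using xy by (rule anti)
  have A: "inf (sup (c y) (inf (c x) x)) (c (sup (c y) (inf (c x) x))) = zero_xy c x y"
    using fwdA[OF sp cyx] zero_swap by simp
  have "c (sup (c y) (inf (c x) x)) = inf y (sup x (c x))"
    by (simp add: sup_commute)
  then have "inf (inf y (sup x (c x))) (c (inf y (sup x (c x)))) = zero_xy c x y"
    using A by (metis inf_commute inv)
  then show "proj c (zero_xy c x y) y \<in> Sh_local c x y"
    using proj_in[of x y y] proj_y[OF xy]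
    unfolding Sh_local_def local_carrier_def by simp
  show "orthogonal_poset (Sh_local c x y) c (zero_xy c x y) (one_xy c x y)"
    unfolding orthogonal_poset_def
  proof (intro conjI ballI impI)
    show "zero_xy c x y \<in> Sh_local c x y"
      using zero_le_one[of x y] unfolding Sh_local_def local_carrier_def
      by (simp add: inf_absorb1)
    show "one_xy c x y \<in> Sh_local c x y"
      using zero_le_one[of x y] unfolding Sh_local_def local_carrier_def
      by (simp add: inf_absorb2)
    fix u assume u: "u \<in> Sh_local c x y"
    then show "zero_xy c x y \<le> u" "u \<le> one_xy c x y" "inf u (c u) = zero_xy c x y"
      "c (c u) = u"
      unfolding Sh_local_def local_carrier_def by auto
    show "c u \<in> Sh_local c x y" using u
      unfolding Sh_local_def local_carrier_def
      by (auto simp: inf_commute) (metis c_one le_iff inv)+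
  next
    fix u v assume "u \<in> Sh_local c x y" "v \<in> Sh_local c x y" "u \<le> v"
    then show "c v \<le> c u" by simp
  next
    fix u v assume u: "u \<in> Sh_local c x y" and v: "v \<in> Sh_local c x y" and uv: "u \<le> c v"
    have "sup (inf u (c u)) (inf (c v) (c (c v))) = inf (inf (c u) (c v)) (c (inf (c u) (c v)))"
      using sp uv unfolding SP2_def by blast
    then have "zero_xy c x y = inf (inf (c u) (c v)) (sup u v)"
      using u v unfolding Sh_local_def by (simp add: inf_commute)
    then show "sup u v \<in> Sh_local c x y" using u v
      unfolding Sh_local_def local_carrier_def by (simp add: inf_commute)
  qed
qed

lemma op_c: "orthogonal_poset S c b t \<Longrightarrow> u \<in> S \<Longrightarrow> c u \<in> S"
  unfolding orthogonal_poset_def by (elim conjE) (erule bspec)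

lemma op_j: "orthogonal_poset S c b t \<Longrightarrow> u \<in> S \<Longrightarrow> v \<in> S \<Longrightarrow> u \<le> c v \<Longrightarrow> sup u v \<in> S"
  unfolding orthogonal_poset_def by (elim conjE) simp

lemma bwd: assumes xy: "x \<le> y"
  and H: "proj c (zero_xy c x y) x \<in> Sh_local c x y \<and>
       proj c (zero_xy c x y) y \<in> Sh_local c x y \<and>
       orthogonal_poset (Sh_local c x y) c (zero_xy c x y) (one_xy c x y)"
  shows "sup (inf x (c x)) (inf y (c y)) = inf (inf (c x) y) (c (inf (c x) y))"
proof -
  let ?p = "sup x (inf y (c y))"
  let ?q = "inf y (sup x (c x))"
  have p: "?p \<in> Sh_local c x y" using H proj_x[OF xy] by simp
  have q: "?q \<in> Sh_local c x y" using H proj_y[OF xy] by simp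
  have op: "orthogonal_poset (Sh_local c x y) c (zero_xy c x y) (one_xy c x y)" using H by simp
  have cq: "c ?q \<in> Sh_local c x y" using op q by (rule op_c)
  have cyx: "c y \<le> c x" using xy by (rule anti)
  have pq0: "?p \<le> ?q"
  proof (rule le_supI)
    show "x \<le> ?q" using xy by (intro le_infI) simp_all
    have "inf y (c y) \<le> sup x (c x)"
      using order_trans[OF inf_le2 order_trans[OF cyx sup_ge2]] .
    then show "inf y (c y) \<le> ?q" by (intro le_infI) simp_all
  qed
  have pq: "?p \<le> c (c ?q)" using pq0 by simp
  have s: "sup ?p (c ?q) \<in> Sh_local c x y"
    using op p cq pq by (rule op_j)
  have cq': "c ?q = sup (c y) (inf (c x) x)" by (simp add: sup_commute)
  have e: "sup ?p (c ?q) = sup x (c y)"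
    unfolding cq'
  proof (rule antisym)
    have "inf y (c y) \<le> sup x (c y)" using order_trans[OF inf_le2 sup_ge2] .
    moreover have "inf (c x) x \<le> sup x (c y)" using order_trans[OF inf_le2 sup_ge1] .
    ultimately show "sup ?p (sup (c y) (inf (c x) x)) \<le> sup x (c y)"
      by (intro le_supI) simp_all
    show "sup x (c y) \<le> sup ?p (sup (c y) (inf (c x) x))"
      by (intro sup_mono) simp_all
  qed
  have "inf (sup x (c y)) (inf (c x) y) = zero_xy c x y"
    using s unfolding e Sh_local_def by simp
  then show ?thesis unfolding zero_xy_def by (simp add: inf_commute sup_commute)
qed

end

theorem lemma3p20:
  fixes c :: "'a::bounded_lattice \<Rightarrow> 'a"
  assumes "pseudo_kleene c"
  shows "SP2 c \<longleftrightarrow>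
    (\<forall>x y. x \<le> y \<longrightarrow>
       proj c (zero_xy c x y) x \<in> Sh_local c x y \<and>
       proj c (zero_xy c x y) y \<in> Sh_local c x y \<and>
       orthogonal_poset (Sh_local c x y) c (zero_xy c x y) (one_xy c x y))"
proof (intro iffI allI impI)
  fix x y :: 'a
  assume "SP2 c" "x \<le> y"
  then show "proj c (zero_xy c x y) x \<in> Sh_local c x y \<and>
       proj c (zero_xy c x y) y \<in> Sh_local c x y \<and>
       orthogonal_poset (Sh_local c x y) c (zero_xy c x y) (one_xy c x y)"
    by (rule fwd[OF assms])
next
  assume H: "\<forall>x y. x \<le> y \<longrightarrow>
       proj c (zero_xy c x y) x \<in> Sh_local c x y \<and>
       proj c (zero_xy c x y) y \<in> Sh_local c x y \<and>
       orthogonal_poset (Sh_local c x y) c (zero_xy c x y) (one_xy c x y)"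
  show "SP2 c" unfolding SP2_def
  proof (intro allI impI)
    fix x y :: 'a
    assume xy: "x \<le> y"
    show "sup (inf x (c x)) (inf y (c y)) = inf (inf (c x) y) (c (inf (c x) y))"
      using bwd[OF assms xy] H xy by blast
  qed
qed

end
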